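(* Let $H$ be a distribution function on $\mathbb{R}$ with finite variance, let $n\ge1$, and let $x_{ki}$, $k=1,2,\ldots$, $i=1,\ldots,n$, be i.i.d. random variables with distribution $H$. For each $k$ put $\bar x_k=\frac1n\sum_{i=1}^n x_{ki}$ and $R_k=(x_{k1}-\bar x_k,\ldots,x_{kn}-\bar x_k)\in\mathbb{R}^n$. Then for any $N>1$, $$(N-1)\,\mathrm{var}\{E(\bar x_1\mid R_1+\cdots+R_{N-1})\}\ \ge\ N\,\mathrm{var}\{E(\bar x_1\mid R_1+\cdots+R_N)\},$$ where sums of the vectors $R_k$ are componentwise. *)

theory Defs
  imports "HOL-Probability.Probability"
begin

definition row_mean :: "(nat \<Rightarrow> 'n::finite \<Rightarrow> 'a \<Rightarrow> real) \<Rightarrow> nat \<Rightarrow> 'a \<Rightarrow> real" where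
  "row_mean X k \<omega> = (\<Sum>i\<in>UNIV. X k i \<omega>) / real CARD('n)"

definition resid :: "(nat \<Rightarrow> 'n::finite \<Rightarrow> 'a \<Rightarrow> real) \<Rightarrow> nat \<Rightarrow> 'a \<Rightarrow> real ^ 'n" where
  "resid X k \<omega> = (\<chi> i. X k i \<omega> - row_mean X k \<omega>)"

text \<open>Componentwise sum R_1 + ... + R_N (rows indexed 0..N-1).\<close>
definition resid_sum :: "(nat \<Rightarrow> 'n::finite \<Rightarrow> 'a \<Rightarrow> real) \<Rightarrow> nat \<Rightarrow> 'a \<Rightarrow> real ^ 'n" where
  "resid_sum X N \<omega> = (\<Sum>k<N. resid X k \<omega>)"

definition resid_sigma :: "'a measure \<Rightarrow> (nat \<Rightarrow> 'n::finite \<Rightarrow> 'a \<Rightarrow> real) \<Rightarrow> nat \<Rightarrow> 'a measure" where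
  "resid_sigma M X N = vimage_algebra (space M) (resid_sum X N) (borel :: (real ^ 'n) measure)"

end

theory Submission
  imports Defs
begin


primrec convp :: "'v::euclidean_space measure \<Rightarrow> nat \<Rightarrow> 'v measure" where
  "convp Q 0 = return borel 0"
| "convp Q (Suc k) = distr (convp Q k \<Otimes>\<^sub>M Q) borel (\<lambda>(u,a). u + a)"

lemma sets_convp[measurable_cong, simp]: "sets (convp Q k) = sets borel"
  by (cases k) auto

lemma convp_Suc': "convp Q (Suc k) = distr (convp Q k \<Otimes>\<^sub>M Q) borel (\<lambda>z. fst z + snd z)"
  by (simp add: case_prod_beta')

declare convp.simps(2)[simp del]

lemma space_convp[simp]: "space (convp Q k) = UNIV"
  using sets_eq_imp_space_eq[OF sets_convp] by simp

definition Aop :: "'v::euclidean_space measure \<Rightarrow> ('v \<Rightarrow> real) \<Rightarrow> 'v \<Rightarrow> real" where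
  "Aop Q \<phi> u = (\<integral>a. \<phi> (u + a) \<partial>Q)"

lemma jensen_nn:
  fixes g :: "'a \<Rightarrow> real"
  assumes "prob_space Q" and [measurable]: "g \<in> borel_measurable Q"
  shows "ennreal ((\<integral>x. g x \<partial>Q)\<^sup>2) \<le> (\<integral>\<^sup>+x. ennreal ((g x)\<^sup>2) \<partial>Q)"
proof (cases "integrable Q (\<lambda>x. (g x)\<^sup>2)")
  case True
  interpret prob_space Q by fact
  have gi: "integrable Q g" using square_integrable_imp_integrable[OF assms(2) True] .
  have "0 \<le> prob_space.variance Q g" by simp
  then have "(\<integral>x. g x \<partial>Q)\<^sup>2 \<le> (\<integral>x. (g x)\<^sup>2 \<partial>Q)"
    using variance_eq[OF gi True] by simp
  moreover have "(\<integral>\<^sup>+x. ennreal ((g x)\<^sup>2) \<partial>Q) = ennreal (\<integral>x. (g x)\<^sup>2 \<partial>Q)"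
    by (rule nn_integral_eq_integral[OF True]) simp
  ultimately show ?thesis by simp
next
  case False
  have "(\<integral>\<^sup>+x. ennreal ((g x)\<^sup>2) \<partial>Q) = \<infinity>"
    using False unfolding integrable_iff_bounded by (auto simp: less_top[symmetric])
  then show ?thesis by simp
qed

lemma jensen_real:
  fixes g :: "'a \<Rightarrow> real"
  assumes "prob_space Q" and [measurable]: "g \<in> borel_measurable Q" and sq: "integrable Q (\<lambda>x. (g x)\<^sup>2)"
  shows "(\<integral>x. g x \<partial>Q)\<^sup>2 \<le> (\<integral>x. (g x)\<^sup>2 \<partial>Q)"
proof -
  interpret prob_space Q by fact
  have gi: "integrable Q g" using square_integrable_imp_integrable[OF assms(2) sq] .
  have "0 \<le> prob_space.variance Q g" by simp
  then show ?thesis using variance_eq[OF gi sq] by simp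
qed

lemma sq_integral_expand:
  fixes g :: "'a \<Rightarrow> real"
  assumes "prob_space Q" and [measurable]: "g \<in> borel_measurable Q" and sq: "integrable Q (\<lambda>x. (g x)\<^sup>2)"
  shows "integrable Q (\<lambda>x. (g x - c)\<^sup>2)"
    "(\<integral>x. (g x - c)\<^sup>2 \<partial>Q) = (\<integral>x. (g x)\<^sup>2 \<partial>Q) - 2 * c * (\<integral>x. g x \<partial>Q) + c\<^sup>2"
proof -
  interpret prob_space Q by fact
  have gi: "integrable Q g" using square_integrable_imp_integrable[OF assms(2) sq] .
  have eq: "\<And>x. (g x - c)\<^sup>2 = (g x)\<^sup>2 - 2 * c * g x + c\<^sup>2" by (simp add: power2_eq_square algebra_simps)
  show "integrable Q (\<lambda>x. (g x - c)\<^sup>2)" unfolding eq using gi sq by auto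
  show "(\<integral>x. (g x - c)\<^sup>2 \<partial>Q) = (\<integral>x. (g x)\<^sup>2 \<partial>Q) - 2 * c * (\<integral>x. g x \<partial>Q) + c\<^sup>2"
    unfolding eq using gi sq by (simp add: prob_space)
qed

lemma pv_decomp:
  fixes g :: "'a \<Rightarrow> real"
  assumes "prob_space Q" and [measurable]: "g \<in> borel_measurable Q" and sq: "integrable Q (\<lambda>x. (g x)\<^sup>2)"
  shows "(\<integral>\<^sup>+x. ennreal ((g x - c)\<^sup>2) \<partial>Q) = ennreal (((\<integral>x. g x \<partial>Q) - c)\<^sup>2) + (\<integral>\<^sup>+x. ennreal ((g x - (\<integral>y. g y \<partial>Q))\<^sup>2) \<partial>Q)"
proof -
  let ?m = "\<integral>y. g y \<partial>Q"
  note e1 = sq_integral_expand[OF assms, of c]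
  note e2 = sq_integral_expand[OF assms, of ?m]
  have "(\<integral>\<^sup>+x. ennreal ((g x - c)\<^sup>2) \<partial>Q) = ennreal (\<integral>x. (g x - c)\<^sup>2 \<partial>Q)"
    by (rule nn_integral_eq_integral[OF e1(1)]) simp
  moreover have "(\<integral>\<^sup>+x. ennreal ((g x - ?m)\<^sup>2) \<partial>Q) = ennreal (\<integral>x. (g x - ?m)\<^sup>2 \<partial>Q)"
    by (rule nn_integral_eq_integral[OF e2(1)]) simp
  moreover have "(\<integral>x. (g x - c)\<^sup>2 \<partial>Q) = (?m - c)\<^sup>2 + (\<integral>x. (g x - ?m)\<^sup>2 \<partial>Q)"
    unfolding e1(2) e2(2) by (simp add: power2_eq_square algebra_simps)
  moreover have "0 \<le> (\<integral>x. (g x - ?m)\<^sup>2 \<partial>Q)" by simp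
  ultimately show ?thesis by (simp add: ennreal_plus)
qed

context
  fixes Q :: "'v::euclidean_space measure"
  assumes Qp: "prob_space Q" and Qs[measurable_cong]: "sets Q = sets borel"
begin

lemma prob_space_convp: "prob_space (convp Q k)"
proof (induction k)
  case 0 then show ?case by (simp add: prob_space_return)
next
  case (Suc k)
  interpret pair_prob_space "convp Q k" Q
    using Suc Qp by (simp add: pair_prob_space_def pair_sigma_finite_def prob_space_imp_sigma_finite)
  show ?case unfolding convp_Suc' by (rule prob_space_distr) measurable
qed

interpretation Q: prob_space Q by (rule Qp)

lemma Aop_meas[measurable]:
  assumes [measurable]: "\<phi> \<in> borel_measurable borel" shows "Aop Q \<phi> \<in> borel_measurable borel"
  unfolding Aop_def by measurable


definition VarN :: "'w measure \<Rightarrow> ('w \<Rightarrow> real) \<Rightarrow> ennreal" where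
  "VarN L \<phi> = (\<integral>\<^sup>+x. ennreal ((\<phi> x - (\<integral>y. \<phi> y \<partial>L))\<^sup>2) \<partial>L)"

definition Dv :: "nat \<Rightarrow> ('v \<Rightarrow> real) \<Rightarrow> ennreal" where
  "Dv k \<phi> = (\<integral>\<^sup>+u. (\<integral>\<^sup>+a. ennreal ((\<phi> (u + a) - Aop Q \<phi> u)\<^sup>2) \<partial>Q) \<partial>convp Q k)"

lemma conv_sq_int:
  fixes \<phi> :: "'v \<Rightarrow> real"
  assumes [measurable]: "\<phi> \<in> borel_measurable borel" and sq: "integrable (convp Q m) (\<lambda>x. (\<phi> x)\<^sup>2)"
  shows "integrable (convp Q m) \<phi>"
proof -
  have "finite_measure (convp Q m)" using prob_space_convp[of m] by (simp add: prob_space_def)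
  from finite_measure.square_integrable_imp_integrable[OF this _ sq] show ?thesis by simp
qed

lemma int_conv:
  fixes f :: "'v \<Rightarrow> real"
  assumes [measurable]: "f \<in> borel_measurable borel"
  shows "integrable (convp Q (Suc k)) f \<longleftrightarrow> integrable (convp Q k \<Otimes>\<^sub>M Q) (\<lambda>z. f (fst z + snd z))"
  unfolding convp_Suc' by (rule integrable_distr_eq) measurable

lemma PY:
  assumes [measurable]: "\<phi> \<in> borel_measurable borel"
    and sq: "integrable (convp Q (Suc k)) (\<lambda>x. (\<phi> x)\<^sup>2)"
  shows "integrable (convp Q k) (\<lambda>u. (Aop Q \<phi> u)\<^sup>2)"
    "(\<integral>u. Aop Q \<phi> u \<partial>convp Q k) = (\<integral>x. \<phi> x \<partial>convp Q (Suc k))"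
    "VarN (convp Q (Suc k)) \<phi> = VarN (convp Q k) (Aop Q \<phi>) + Dv k \<phi>"
proof -
  let ?L = "convp Q k"
  interpret L: prob_space ?L by (rule prob_space_convp)
  interpret P: pair_prob_space ?L Q
    by (simp add: pair_prob_space_def pair_sigma_finite_def prob_space_imp_sigma_finite L.prob_space_axioms Q.prob_space_axioms)
  have add[measurable]: "(\<lambda>z. fst z + snd z) \<in> measurable (?L \<Otimes>\<^sub>M Q) borel" by measurable
  have sq2: "integrable (?L \<Otimes>\<^sub>M Q) (\<lambda>z. (\<phi> (fst z + snd z))\<^sup>2)"
    using sq int_conv[of "\<lambda>x. (\<phi> x)\<^sup>2"] by simp
  have i1: "integrable (convp Q (Suc k)) \<phi>"
    by (rule conv_sq_int[OF _ sq]) simp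
  have i2: "integrable (?L \<Otimes>\<^sub>M Q) (\<lambda>z. \<phi> (fst z + snd z))"
    using i1 int_conv[of \<phi>] by simp
  have ae: "AE u in ?L. integrable Q (\<lambda>a. (\<phi> (u + a))\<^sup>2)"
    using P.AE_integrable_fst'[OF sq2] by simp
  show "integrable ?L (\<lambda>u. (Aop Q \<phi> u)\<^sup>2)"
  proof (rule Bochner_Integration.integrable_bound[OF P.integrable_fst'[OF sq2]])
    show "(\<lambda>u. (Aop Q \<phi> u)\<^sup>2) \<in> borel_measurable ?L" by measurable
    show "AE x in ?L. norm ((Aop Q \<phi> x)\<^sup>2) \<le> norm (\<integral>y. (\<phi> (fst (x, y) + snd (x, y)))\<^sup>2 \<partial>Q)"
      using ae
    proof eventually_elim
      case (elim u)
      have "(Aop Q \<phi> u)\<^sup>2 \<le> (\<integral>a. (\<phi> (u + a))\<^sup>2 \<partial>Q)"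
        unfolding Aop_def by (rule jensen_real[OF Qp _ elim]) measurable
      then show ?case by simp
    qed
  qed
  show meq: "(\<integral>u. Aop Q \<phi> u \<partial>?L) = (\<integral>x. \<phi> x \<partial>convp Q (Suc k))"
    unfolding Aop_def convp_Suc' using P.integral_fst'[OF i2]
    by (simp add: integral_distr)
  let ?c = "\<integral>x. \<phi> x \<partial>convp Q (Suc k)"
  have "VarN (convp Q (Suc k)) \<phi> = (\<integral>\<^sup>+z. ennreal ((\<phi> (fst z + snd z) - ?c)\<^sup>2) \<partial>(?L \<Otimes>\<^sub>M Q))"
    unfolding VarN_def convp_Suc' by (subst nn_integral_distr) auto
  also have "\<dots> = (\<integral>\<^sup>+u. (\<integral>\<^sup>+a. ennreal ((\<phi> (u + a) - ?c)\<^sup>2) \<partial>Q) \<partial>?L)"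
    by (subst Q.nn_integral_fst[symmetric]) auto
  also have "\<dots> = (\<integral>\<^sup>+u. ennreal ((Aop Q \<phi> u - ?c)\<^sup>2) + (\<integral>\<^sup>+a. ennreal ((\<phi> (u + a) - Aop Q \<phi> u)\<^sup>2) \<partial>Q) \<partial>?L)"
  proof (intro nn_integral_cong_AE)
    show "AE u in ?L. (\<integral>\<^sup>+a. ennreal ((\<phi> (u + a) - ?c)\<^sup>2) \<partial>Q) = ennreal ((Aop Q \<phi> u - ?c)\<^sup>2) + (\<integral>\<^sup>+a. ennreal ((\<phi> (u + a) - Aop Q \<phi> u)\<^sup>2) \<partial>Q)"
      using ae
    proof eventually_elim
      case (elim u)
      then show ?case unfolding Aop_def by (intro pv_decomp[OF Qp]) auto
    qed
  qed
  also have "\<dots> = (\<integral>\<^sup>+u. ennreal ((Aop Q \<phi> u - ?c)\<^sup>2) \<partial>?L) + Dv k \<phi>"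
    unfolding Dv_def by (rule nn_integral_add) auto
  also have "\<dots> = VarN ?L (Aop Q \<phi>) + Dv k \<phi>"
    unfolding VarN_def meq ..
  finally show "VarN (convp Q (Suc k)) \<phi> = VarN ?L (Aop Q \<phi>) + Dv k \<phi>" .
qed

lemma CT:
  assumes [measurable]: "\<phi> \<in> borel_measurable borel"
    and sq: "integrable (convp Q (Suc (Suc k))) (\<lambda>x. (\<phi> x)\<^sup>2)"
  shows "Dv k (Aop Q \<phi>) \<le> Dv (Suc k) \<phi>"
proof -
  let ?L = "convp Q k" and ?L1 = "convp Q (Suc k)" and ?\<psi> = "Aop Q \<phi>"
  interpret L: prob_space ?L by (rule prob_space_convp)
  interpret L1: prob_space ?L1 by (rule prob_space_convp)
  interpret P: pair_prob_space ?L Q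
    by (simp add: pair_prob_space_def pair_sigma_finite_def prob_space_imp_sigma_finite L.prob_space_axioms Q.prob_space_axioms)
  interpret P1: pair_prob_space ?L1 Q
    unfolding pair_prob_space_def pair_sigma_finite_def
    by (intro conjI prob_space_imp_sigma_finite L1.prob_space_axioms Q.prob_space_axioms)
  interpret QQ: pair_prob_space Q Q
    by (simp add: pair_prob_space_def pair_sigma_finite_def prob_space_imp_sigma_finite Q.prob_space_axioms)
  have i1: "integrable (convp Q (Suc (Suc k))) \<phi>" by (rule conv_sq_int[OF _ sq]) simp
  have i2: "integrable (?L1 \<Otimes>\<^sub>M Q) (\<lambda>z. \<phi> (fst z + snd z))"
    using i1 int_conv[of \<phi>] by simp
  have ae1: "AE v in ?L1. integrable Q (\<lambda>b. \<phi> (v + b))"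
    using P1.AE_integrable_fst'[OF i2] by simp
  then have ae1a: "AE v in distr (?L \<Otimes>\<^sub>M Q) borel (\<lambda>z. fst z + snd z). integrable Q (\<lambda>b. \<phi> (v + b))"
    by (simp only: convp_Suc')
  have ae1': "AE z in ?L \<Otimes>\<^sub>M Q. integrable Q (\<lambda>b. \<phi> (fst z + snd z + b))"
    by (rule AE_distrD[OF _ ae1a]) measurable
  have psq: "integrable ?L1 (\<lambda>u. (?\<psi> u)\<^sup>2)" by (rule PY(1)[OF _ sq]) simp
  have pi: "integrable ?L1 ?\<psi>" by (rule conv_sq_int[OF _ psq]) simp
  have pi2: "integrable (?L \<Otimes>\<^sub>M Q) (\<lambda>z. ?\<psi> (fst z + snd z))"
    using pi int_conv[of ?\<psi>] by simp
  have ae2: "AE t in ?L. integrable Q (\<lambda>b. ?\<psi> (t + b))"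
    using P.AE_integrable_fst'[OF pi2] by simp
  then have ae2a: "AE t in distr (?L \<Otimes>\<^sub>M Q) ?L fst. integrable Q (\<lambda>b. ?\<psi> (t + b))"
    by (simp only: Q.distr_pair_fst)
  have ae2': "AE z in ?L \<Otimes>\<^sub>M Q. integrable Q (\<lambda>b. ?\<psi> (fst z + b))"
    by (rule AE_distrD[OF _ ae2a]) measurable
  have "Dv k ?\<psi> = (\<integral>\<^sup>+z. ennreal ((?\<psi> (fst z + snd z) - Aop Q ?\<psi> (fst z))\<^sup>2) \<partial>(?L \<Otimes>\<^sub>M Q))"
    unfolding Dv_def by (subst Q.nn_integral_fst[symmetric]) auto
  also have "\<dots> \<le> (\<integral>\<^sup>+z. (\<integral>\<^sup>+b. ennreal ((\<phi> (fst z + b + snd z) - ?\<psi> (fst z + b))\<^sup>2) \<partial>Q) \<partial>(?L \<Otimes>\<^sub>M Q))"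
  proof (intro nn_integral_mono_AE)
    show "AE z in ?L \<Otimes>\<^sub>M Q. ennreal ((?\<psi> (fst z + snd z) - Aop Q ?\<psi> (fst z))\<^sup>2) \<le> (\<integral>\<^sup>+b. ennreal ((\<phi> (fst z + b + snd z) - ?\<psi> (fst z + b))\<^sup>2) \<partial>Q)"
      using ae1' ae2'
    proof eventually_elim
      case (elim z)
      obtain t a where z: "z = (t, a)" by (cases z)
      have e1: "integrable Q (\<lambda>b. \<phi> (t + a + b))" using elim(1) z by simp
      have e2: "integrable Q (\<lambda>b. ?\<psi> (t + b))" using elim(2) z by simp
      have "?\<psi> (t + a) - Aop Q ?\<psi> t = (\<integral>b. \<phi> (t + a + b) - ?\<psi> (t + b) \<partial>Q)"
        using e1 e2 by (simp add: Aop_def add.assoc)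
      then have "ennreal ((?\<psi> (t + a) - Aop Q ?\<psi> t)\<^sup>2) \<le> (\<integral>\<^sup>+b. ennreal ((\<phi> (t + a + b) - ?\<psi> (t + b))\<^sup>2) \<partial>Q)"
        by (simp only:) (rule jensen_nn[OF Qp], measurable)
      also have "\<dots> = (\<integral>\<^sup>+b. ennreal ((\<phi> (t + b + a) - ?\<psi> (t + b))\<^sup>2) \<partial>Q)"
        by (simp add: ac_simps)
      finally show ?case using z by simp
    qed
  qed
  also have "\<dots> = (\<integral>\<^sup>+t. (\<integral>\<^sup>+a. (\<integral>\<^sup>+b. ennreal ((\<phi> (t + b + a) - ?\<psi> (t + b))\<^sup>2) \<partial>Q) \<partial>Q) \<partial>?L)"
    by (subst Q.nn_integral_fst[symmetric]) auto
  also have "\<dots> = (\<integral>\<^sup>+t. (\<integral>\<^sup>+b. (\<integral>\<^sup>+a. ennreal ((\<phi> (t + b + a) - ?\<psi> (t + b))\<^sup>2) \<partial>Q) \<partial>Q) \<partial>?L)"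
    by (intro nn_integral_cong QQ.Fubini') measurable
  also have "\<dots> = (\<integral>\<^sup>+z. (\<integral>\<^sup>+a. ennreal ((\<phi> (fst z + snd z + a) - ?\<psi> (fst z + snd z))\<^sup>2) \<partial>Q) \<partial>(?L \<Otimes>\<^sub>M Q))"
    by (subst Q.nn_integral_fst[symmetric]) auto
  also have "\<dots> = Dv (Suc k) \<phi>"
    unfolding Dv_def convp_Suc' by (subst nn_integral_distr) auto
  finally show ?thesis .
qed

lemma ES:
  "\<phi> \<in> borel_measurable borel \<Longrightarrow> integrable (convp Q (Suc k)) (\<lambda>x. (\<phi> x)\<^sup>2) \<Longrightarrow>
    VarN (convp Q (Suc k)) \<phi> \<le> of_nat (Suc k) * Dv k \<phi>"
proof (induction k arbitrary: \<phi>)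
  case 0
  note [measurable] = 0(1)
  have "VarN (convp Q (Suc 0)) \<phi> = VarN (convp Q 0) (Aop Q \<phi>) + Dv 0 \<phi>" by (rule PY(3)[OF 0])
  moreover have "VarN (convp Q 0) (Aop Q \<phi>) = 0"
    unfolding VarN_def by (simp add: nn_integral_return integral_return)
  ultimately show ?case by simp
next
  case (Suc k)
  note [measurable] = Suc(2)
  have psq: "integrable (convp Q (Suc k)) (\<lambda>u. (Aop Q \<phi> u)\<^sup>2)" by (rule PY(1)[OF Suc(2,3)])
  have "VarN (convp Q (Suc (Suc k))) \<phi> = VarN (convp Q (Suc k)) (Aop Q \<phi>) + Dv (Suc k) \<phi>" by (rule PY(3)[OF Suc(2,3)])
  also have "\<dots> \<le> of_nat (Suc k) * Dv k (Aop Q \<phi>) + Dv (Suc k) \<phi>"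
    by (intro add_mono Suc.IH psq order_refl) simp
  also have "\<dots> \<le> of_nat (Suc k) * Dv (Suc k) \<phi> + Dv (Suc k) \<phi>"
    by (intro add_mono mult_left_mono CT Suc(2,3) order_refl) simp
  also have "\<dots> = of_nat (Suc (Suc k)) * Dv (Suc k) \<phi>"
    by (simp add: distrib_right)
  finally show ?case .
qed

lemma ES_real:
  assumes [measurable]: "\<phi> \<in> borel_measurable borel"
    and sq: "integrable (convp Q (Suc k)) (\<lambda>x. (\<phi> x)\<^sup>2)"
  defines "c \<equiv> \<integral>x. \<phi> x \<partial>convp Q (Suc k)"
  shows "real (Suc k) * (\<integral>u. (Aop Q \<phi> u - c)\<^sup>2 \<partial>convp Q k) \<le> real k * (\<integral>x. (\<phi> x - c)\<^sup>2 \<partial>convp Q (Suc k))"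
proof -
  interpret L: prob_space "convp Q k" by (rule prob_space_convp)
  interpret L1: prob_space "convp Q (Suc k)" by (rule prob_space_convp)
  have psq: "integrable (convp Q k) (\<lambda>u. (Aop Q \<phi> u)\<^sup>2)" by (rule PY(1)[OF _ sq]) simp
  have mean: "(\<integral>u. Aop Q \<phi> u \<partial>convp Q k) = c" unfolding c_def by (rule PY(2)[OF _ sq]) simp
  let ?a = "\<integral>u. (Aop Q \<phi> u - c)\<^sup>2 \<partial>convp Q k"
  let ?b = "\<integral>x. (\<phi> x - c)\<^sup>2 \<partial>convp Q (Suc k)"
  have ia: "integrable (convp Q k) (\<lambda>u. (Aop Q \<phi> u - c)\<^sup>2)"
    by (rule sq_integral_expand(1)[OF L.prob_space_axioms _ psq]) simp
  have ib: "integrable (convp Q (Suc k)) (\<lambda>x. (\<phi> x - c)\<^sup>2)"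
    by (rule sq_integral_expand(1)[OF L1.prob_space_axioms _ sq]) simp
  have Va: "VarN (convp Q k) (Aop Q \<phi>) = ennreal ?a"
    unfolding VarN_def mean by (rule nn_integral_eq_integral[OF ia]) simp
  have Vb: "VarN (convp Q (Suc k)) \<phi> = ennreal ?b"
    unfolding VarN_def c_def[symmetric] by (rule nn_integral_eq_integral[OF ib]) simp
  have a0: "0 \<le> ?a" and b0: "0 \<le> ?b" by simp_all
  have e1: "ennreal ?b = ennreal ?a + Dv k \<phi>" using PY(3)[OF _ sq] Va Vb by simp
  have e2: "ennreal ?b \<le> of_nat (Suc k) * Dv k \<phi>" using ES[OF _ sq] Vb by simp
  have "Dv k \<phi> \<noteq> \<top>"
  proof
    assume "Dv k \<phi> = \<top>"
    with e1 show False by simp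
  qed
  then obtain d where d: "Dv k \<phi> = ennreal d" "0 \<le> d" by (cases "Dv k \<phi>" rule: ennreal_cases) auto
  have "ennreal ?b = ennreal (?a + d)" using e1 d a0 by (simp add: ennreal_plus)
  then have bd: "?b = ?a + d" using a0 d b0 by (subst (asm) ennreal_inj) auto
  have "of_nat (Suc k) * ennreal d = ennreal (real (Suc k) * d)"
    using d(2) by (subst ennreal_mult) (auto simp: ennreal_of_nat_eq_real_of_nat)
  then have "ennreal ?b \<le> ennreal (real (Suc k) * d)"
    using e2 d by simp
  then have "?b \<le> real (Suc k) * d" using d by (subst (asm) ennreal_le_iff) auto
  then show ?thesis using bd by (simp add: algebra_simps)
qed

end



lemma doob_dynkin_ennreal:
  fixes s :: "'a \<Rightarrow> 'b" and u :: "'a \<Rightarrow> ennreal"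
  assumes s: "s \<in> \<Omega> \<rightarrow> space Bm" and u: "u \<in> borel_measurable (vimage_algebra \<Omega> s Bm)"
  shows "\<exists>\<phi>\<in>borel_measurable Bm. \<forall>\<omega>\<in>\<Omega>. u \<omega> = \<phi> (s \<omega>)"
  using u
proof (induction rule: borel_measurable_induct)
  case (cong f g)
  from cong(4) obtain \<phi> where p: "\<phi> \<in> borel_measurable Bm" "\<forall>\<omega>\<in>\<Omega>. g \<omega> = \<phi> (s \<omega>)" by blast
  show ?case
  proof (intro bexI[of _ \<phi>] ballI)
    fix \<omega> assume "\<omega> \<in> \<Omega>"
    then show "f \<omega> = \<phi> (s \<omega>)" using cong(3)[of \<omega>] p(2) by simp
  qed (rule p(1))
next
  case (set A)
  then obtain B where B: "B \<in> sets Bm" "A = s -` B \<inter> \<Omega>"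
    using sets_vimage_algebra2[OF s] by auto
  show ?case
  proof (intro bexI[of _ "indicator B"] ballI)
    fix \<omega> assume "\<omega> \<in> \<Omega>"
    then show "indicator A \<omega> = (indicator B (s \<omega>) :: ennreal)" using B(2) by (simp add: indicator_def)
  qed (use B(1) in simp)
next
  case (mult u c)
  from mult(4) obtain \<phi> where p: "\<phi> \<in> borel_measurable Bm" "\<forall>\<omega>\<in>\<Omega>. u \<omega> = \<phi> (s \<omega>)" by blast
  show ?case
  proof (intro bexI[of _ "\<lambda>y. c * \<phi> y"] ballI)
    fix \<omega> assume "\<omega> \<in> \<Omega>"
    then show "c * u \<omega> = c * \<phi> (s \<omega>)" using p(2) by simp
  qed (use p(1) in measurable)
next
  case (add u v)
  from add.IH(1) obtain \<phi> where p: "\<phi> \<in> borel_measurable Bm" "\<forall>\<omega>\<in>\<Omega>. u \<omega> = \<phi> (s \<omega>)" by blast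
  from add.IH(2) obtain \<psi> where q: "\<psi> \<in> borel_measurable Bm" "\<forall>\<omega>\<in>\<Omega>. v \<omega> = \<psi> (s \<omega>)" by blast
  show ?case
  proof (intro bexI[of _ "\<lambda>y. \<psi> y + \<phi> y"] ballI)
    fix \<omega> assume "\<omega> \<in> \<Omega>"
    then show "v \<omega> + u \<omega> = \<psi> (s \<omega>) + \<phi> (s \<omega>)" using p(2) q(2) by simp
  qed (use p(1) q(1) in measurable)
next
  case (seq U)
  from seq.IH have "\<forall>i. \<exists>\<phi>. \<phi> \<in> borel_measurable Bm \<and> (\<forall>\<omega>\<in>\<Omega>. U i \<omega> = \<phi> (s \<omega>))" by blast
  then obtain \<phi> where \<phi>: "\<And>i. \<phi> i \<in> borel_measurable Bm" "\<And>i. \<forall>\<omega>\<in>\<Omega>. U i \<omega> = \<phi> i (s \<omega>)"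
    by metis
  show ?case
  proof (intro bexI[of _ "\<lambda>y. SUP i. \<phi> i y"] ballI)
    fix \<omega> assume "\<omega> \<in> \<Omega>"
    then show "(SUP i. U i) \<omega> = (SUP i. \<phi> i (s \<omega>))" using \<phi>(2) by (simp add: SUP_apply image_comp)
  qed (use \<phi>(1) in measurable)
qed

lemma doob_dynkin:
  fixes s :: "'a \<Rightarrow> 'b" and f :: "'a \<Rightarrow> real"
  assumes s: "s \<in> \<Omega> \<rightarrow> space Bm" and f: "f \<in> borel_measurable (vimage_algebra \<Omega> s Bm)"
  shows "\<exists>\<phi>\<in>borel_measurable Bm. \<forall>\<omega>\<in>\<Omega>. f \<omega> = \<phi> (s \<omega>)"
proof -
  obtain \<phi>1 where p1: "\<phi>1 \<in> borel_measurable Bm" "\<forall>\<omega>\<in>\<Omega>. ennreal (f \<omega>) = \<phi>1 (s \<omega>)"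
    using doob_dynkin_ennreal[OF s, of "\<lambda>x. ennreal (f x)"] f by auto
  obtain \<phi>2 where p2: "\<phi>2 \<in> borel_measurable Bm" "\<forall>\<omega>\<in>\<Omega>. ennreal (- f \<omega>) = \<phi>2 (s \<omega>)"
    using doob_dynkin_ennreal[OF s, of "\<lambda>x. ennreal (- f x)"] f by auto
  show ?thesis
  proof (intro bexI[of _ "\<lambda>y. enn2real (\<phi>1 y) - enn2real (\<phi>2 y)"] ballI)
    fix \<omega> assume "\<omega> \<in> \<Omega>"
    then show "f \<omega> = enn2real (\<phi>1 (s \<omega>)) - enn2real (\<phi>2 (s \<omega>))"
      using p1(2)[rule_format, OF \<open>\<omega> \<in> \<Omega>\<close>, symmetric] p2(2)[rule_format, OF \<open>\<omega> \<in> \<Omega>\<close>, symmetric]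
      by (cases "0 \<le> f \<omega>") (auto simp: ennreal_neg)
  qed (use p1 p2 in measurable)
qed


lemma abs_mult_le_sq: "\<bar>a * b\<bar> \<le> a\<^sup>2 + (b::real)\<^sup>2"
proof -
  have "0 \<le> (\<bar>a\<bar> - \<bar>b\<bar>)\<^sup>2" by simp
  then have "2 * (\<bar>a\<bar> * \<bar>b\<bar>) \<le> a\<^sup>2 + b\<^sup>2" by (simp add: power2_eq_square algebra_simps)
  moreover have "0 \<le> \<bar>a\<bar> * \<bar>b\<bar>" by simp
  ultimately have "\<bar>a\<bar> * \<bar>b\<bar> \<le> a\<^sup>2 + b\<^sup>2" by linarith
  then show ?thesis by (simp add: abs_mult)
qed

lemma integrable_mult_sq:
  fixes f g :: "'a \<Rightarrow> real"
  assumes [measurable]: "f \<in> borel_measurable M" "g \<in> borel_measurable M"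
    and "integrable M (\<lambda>x. (f x)\<^sup>2)" "integrable M (\<lambda>x. (g x)\<^sup>2)"
  shows "integrable M (\<lambda>x. f x * g x)"
proof (rule Bochner_Integration.integrable_bound[of _ "\<lambda>x. (f x)\<^sup>2 + (g x)\<^sup>2"])
  show "integrable M (\<lambda>x. (f x)\<^sup>2 + (g x)\<^sup>2)" using assms by auto
  show "AE x in M. norm (f x * g x) \<le> norm ((f x)\<^sup>2 + (g x)\<^sup>2)"
    using abs_mult_le_sq by (auto intro!: AE_I2 simp del: abs_mult)
qed simp

lemma quad_disc:
  fixes a b c :: real
  assumes q: "\<And>t. 0 \<le> a - 2 * t * b + t\<^sup>2 * c" and c: "0 \<le> c"
  shows "b\<^sup>2 \<le> a * c"
proof (cases "c = 0")
  case True
  have "b = 0"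
  proof (rule ccontr)
    assume "b \<noteq> 0"
    have "0 \<le> a - 2 * ((a + 1) / (2 * b)) * b + ((a + 1) / (2 * b))\<^sup>2 * c" by (rule q)
    with True \<open>b \<noteq> 0\<close> show False by (simp add: field_simps)
  qed
  with True show ?thesis using q[of 0] by simp
next
  case False
  with c have c0: "0 < c" by simp
  have "0 \<le> a - 2 * (b / c) * b + (b / c)\<^sup>2 * c" by (rule q)
  also have "\<dots> = a - b\<^sup>2 / c" using c0 by (simp add: power2_eq_square field_simps)
  finally have "b\<^sup>2 / c \<le> a" by simp
  then show ?thesis using c0 by (simp add: field_simps)
qed

lemma cauchy_schwarz_int:
  fixes U W :: "'a \<Rightarrow> real"
  assumes [measurable]: "U \<in> borel_measurable M" "W \<in> borel_measurable M"
    and iU: "integrable M (\<lambda>x. (U x)\<^sup>2)" and iW: "integrable M (\<lambda>x. (W x)\<^sup>2)"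
  shows "(\<integral>x. U x * W x \<partial>M)\<^sup>2 \<le> (\<integral>x. (U x)\<^sup>2 \<partial>M) * (\<integral>x. (W x)\<^sup>2 \<partial>M)"
proof (rule quad_disc)
  have iUW: "integrable M (\<lambda>x. U x * W x)" by (rule integrable_mult_sq) (use iU iW in auto)
  fix t :: real
  have eq: "\<And>x. (U x - t * W x)\<^sup>2 = (U x)\<^sup>2 - 2 * t * (U x * W x) + t\<^sup>2 * (W x)\<^sup>2"
    by (simp add: power2_eq_square algebra_simps)
  have "0 \<le> (\<integral>x. (U x - t * W x)\<^sup>2 \<partial>M)" by simp
  also have "\<dots> = (\<integral>x. (U x)\<^sup>2 \<partial>M) - 2 * t * (\<integral>x. U x * W x \<partial>M) + t\<^sup>2 * (\<integral>x. (W x)\<^sup>2 \<partial>M)"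
    unfolding eq using iU iW iUW by simp
  finally show "0 \<le> (\<integral>x. (U x)\<^sup>2 \<partial>M) - 2 * t * (\<integral>x. U x * W x \<partial>M) + t\<^sup>2 * (\<integral>x. (W x)\<^sup>2 \<partial>M)" .
qed simp

lemma borel_measurable_vec_lambda:
  fixes f :: "'a \<Rightarrow> 'n::finite \<Rightarrow> real"
  assumes "\<And>i. (\<lambda>x. f x i) \<in> borel_measurable M"
  shows "(\<lambda>x. (\<chi> i. f x i) :: real ^ 'n) \<in> borel_measurable M"
proof (subst borel_measurable_euclidean_space, intro ballI)
  fix b :: "real ^ 'n" assume "b \<in> Basis"
  then obtain j where b: "b = axis j 1" by (auto simp: Basis_vec_def)
  show "(\<lambda>x. (\<chi> i. f x i) \<bullet> b) \<in> borel_measurable M"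
    unfolding b by (simp add: inner_axis assms)
qed



definition rmz :: "(nat \<times> 'n::finite \<Rightarrow> real) \<Rightarrow> nat \<Rightarrow> real" where
  "rmz z k = (\<Sum>i\<in>UNIV. z (k, i)) / real CARD('n)"

definition resz :: "(nat \<times> 'n::finite \<Rightarrow> real) \<Rightarrow> nat \<Rightarrow> real ^ 'n" where
  "resz z k = (\<chi> i. z (k, i) - rmz z k)"

definition ssz :: "(nat \<times> 'n::finite \<Rightarrow> real) \<Rightarrow> nat \<Rightarrow> real ^ 'n" where
  "ssz z m = (\<Sum>k<m. resz z k)"

lemma meas_rmz:
  assumes "\<And>i. (k, i) \<in> A"
  shows "(\<lambda>z. rmz z k) \<in> borel_measurable (PiM A (\<lambda>_. borel))"
  unfolding rmz_def using assms by (intro borel_measurable_divide borel_measurable_sum measurable_component_singleton borel_measurable_const)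

lemma meas_resz:
  assumes "\<And>i. (k, i) \<in> A"
  shows "(\<lambda>z. resz z k) \<in> borel_measurable (PiM A (\<lambda>_. borel))"
  unfolding resz_def
  by (intro borel_measurable_vec_lambda borel_measurable_diff meas_rmz assms measurable_component_singleton)

lemma meas_ssz:
  assumes "\<And>j i. j < m \<Longrightarrow> (j, i) \<in> A"
  shows "(\<lambda>z. ssz z m) \<in> borel_measurable (PiM A (\<lambda>_. borel))"
  unfolding ssz_def by (intro borel_measurable_sum meas_resz assms) auto

lemma rmz_restrict: "(\<And>i. (k, i) \<in> A) \<Longrightarrow> rmz (restrict z A) k = rmz z k"
  unfolding rmz_def by simp

lemma resz_restrict: "(\<And>i. (k, i) \<in> A) \<Longrightarrow> resz (restrict z A) k = resz z k"
  unfolding resz_def by (simp add: rmz_restrict)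

lemma ssz_restrict: "(\<And>j i. j < m \<Longrightarrow> (j, i) \<in> A) \<Longrightarrow> ssz (restrict z A) m = ssz z m"
  unfolding ssz_def by (intro sum.cong refl resz_restrict) auto

lemma row_mean_rmz: "row_mean X k \<omega> = rmz (\<lambda>p. X (fst p) (snd p) \<omega>) k"
  unfolding row_mean_def rmz_def by simp

lemma resid_resz: "resid X k \<omega> = resz (\<lambda>p. X (fst p) (snd p) \<omega>) k"
  unfolding resid_def resz_def row_mean_rmz by simp

lemma resid_sum_ssz: "resid_sum X m \<omega> = ssz (\<lambda>p. X (fst p) (snd p) \<omega>) m"
  unfolding resid_sum_def ssz_def resid_resz by simp

lemma final_arith:
  fixes v w e a b :: real
  assumes v: "0 \<le> v" and w: "0 \<le> w" and b: "0 \<le> b" and a: "0 \<le> a"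
    and cs: "v\<^sup>2 \<le> w * e" and es: "a * e \<le> b * v"
  shows "a * v \<le> b * w"
proof (cases "v = 0")
  case True then show ?thesis using b w by simp
next
  case False
  with v have v0: "0 < v" by simp
  have "a * v\<^sup>2 \<le> a * (w * e)" by (rule mult_left_mono[OF cs a])
  also have "\<dots> = w * (a * e)" by simp
  also have "\<dots> \<le> w * (b * v)" by (rule mult_left_mono[OF es w])
  finally have "(a * v) * v \<le> (b * w) * v" by (simp add: power2_eq_square algebra_simps)
  then show ?thesis using v0 by simp
qed

context
  fixes M :: "'a measure" and H :: "real measure" and X :: "nat \<Rightarrow> 'n::finite \<Rightarrow> 'a \<Rightarrow> real"
  assumes PM: "prob_space M" and PH: "prob_space H" and H2: "integrable H (\<lambda>x. x\<^sup>2)"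
    and ind: "prob_space.indep_vars M (\<lambda>_. borel) (\<lambda>p. X (fst p) (snd p)) UNIV"
    and dist: "\<And>k i. distr M borel (X k i) = H"
begin

interpretation prob_space M by (rule PM)

lemma Xmeas[measurable]: "X k i \<in> borel_measurable M"
  using ind unfolding indep_vars_def by (auto dest: bspec[of _ _ "(k, i)"])

lemma sets_H[measurable_cong]: "sets H = sets borel"
  using dist[of 0 "undefined :: 'n"] by (metis sets_distr)

lemma row_mean_meas[measurable]: "row_mean X k \<in> borel_measurable M"
  unfolding row_mean_def by measurable

lemma resid_meas[measurable]: "resid X k \<in> borel_measurable M"
  unfolding resid_def by (intro borel_measurable_vec_lambda) measurable

lemma resid_sum_meas[measurable]: "resid_sum X m \<in> borel_measurable M"
  unfolding resid_sum_def by measurable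

lemma X_sq: "integrable M (\<lambda>\<omega>. (X k i \<omega>)\<^sup>2)"
proof -
  have "integrable (distr M borel (X k i)) (\<lambda>x. x\<^sup>2)" using H2 dist[of k i] by simp
  then show ?thesis by (subst (asm) integrable_distr_eq) auto
qed

lemma ind1: "indep_var borel (resid_sum X k) borel (resid X k)"
proof -
  let ?A = "{..<k} \<times> (UNIV :: 'n set)" and ?B = "{k} \<times> (UNIV :: 'n set)"
  have "indep_var (PiM ?A (\<lambda>_. borel)) (\<lambda>\<omega>. restrict (\<lambda>p. X (fst p) (snd p) \<omega>) ?A)
      (PiM ?B (\<lambda>_. borel)) (\<lambda>\<omega>. restrict (\<lambda>p. X (fst p) (snd p) \<omega>) ?B)"
    by (rule indep_var_restrict[OF ind]) auto
  from indep_var_compose[OF this meas_ssz[of k ?A] meas_resz[of k ?B]]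
  have "indep_var borel ((\<lambda>z. ssz z k) \<circ> (\<lambda>\<omega>. restrict (\<lambda>p. X (fst p) (snd p) \<omega>) ?A))
     borel ((\<lambda>z. resz z k) \<circ> (\<lambda>\<omega>. restrict (\<lambda>p. X (fst p) (snd p) \<omega>) ?B))" by auto
  also have "(\<lambda>z. ssz z k) \<circ> (\<lambda>\<omega>. restrict (\<lambda>p. X (fst p) (snd p) \<omega>) ?A) = resid_sum X k"
    by (rule ext) (simp add: ssz_restrict resid_sum_ssz)
  also have "(\<lambda>z. resz z k) \<circ> (\<lambda>\<omega>. restrict (\<lambda>p. X (fst p) (snd p) \<omega>) ?B) = resid X k"
    by (rule ext) (simp add: resz_restrict resid_resz)
  finally show ?thesis .
qed

lemma ind2:
  assumes "0 < m"
  shows "indep_var (borel \<Otimes>\<^sub>M borel) (\<lambda>\<omega>. (row_mean X 0 \<omega>, resid_sum X m \<omega>)) (borel \<Otimes>\<^sub>M borel) (\<lambda>\<omega>. (0::real, resid X m \<omega>))"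
proof -
  let ?A = "{..<m} \<times> (UNIV :: 'n set)" and ?B = "{m} \<times> (UNIV :: 'n set)"
  have "indep_var (PiM ?A (\<lambda>_. borel)) (\<lambda>\<omega>. restrict (\<lambda>p. X (fst p) (snd p) \<omega>) ?A)
      (PiM ?B (\<lambda>_. borel)) (\<lambda>\<omega>. restrict (\<lambda>p. X (fst p) (snd p) \<omega>) ?B)"
    by (rule indep_var_restrict[OF ind]) auto
  moreover have "(\<lambda>z. (rmz z 0, ssz z m)) \<in> measurable (PiM ?A (\<lambda>_. borel)) (borel \<Otimes>\<^sub>M borel)"
    by (intro measurable_Pair meas_rmz meas_ssz) (use assms in auto)
  moreover have "(\<lambda>z. (0::real, resz z m)) \<in> measurable (PiM ?B (\<lambda>_. borel)) (borel \<Otimes>\<^sub>M borel)"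
    by (intro measurable_Pair meas_resz) auto
  ultimately have "indep_var (borel \<Otimes>\<^sub>M borel) ((\<lambda>z. (rmz z 0, ssz z m)) \<circ> (\<lambda>\<omega>. restrict (\<lambda>p. X (fst p) (snd p) \<omega>) ?A))
     (borel \<Otimes>\<^sub>M borel) ((\<lambda>z. (0::real, resz z m)) \<circ> (\<lambda>\<omega>. restrict (\<lambda>p. X (fst p) (snd p) \<omega>) ?B))"
    by (rule indep_var_compose)
  also have "(\<lambda>z. (rmz z 0, ssz z m)) \<circ> (\<lambda>\<omega>. restrict (\<lambda>p. X (fst p) (snd p) \<omega>) ?A) = (\<lambda>\<omega>. (row_mean X 0 \<omega>, resid_sum X m \<omega>))"
    using assms by (intro ext) (simp add: ssz_restrict resid_sum_ssz rmz_restrict row_mean_rmz)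
  also have "(\<lambda>z. (0::real, resz z m)) \<circ> (\<lambda>\<omega>. restrict (\<lambda>p. X (fst p) (snd p) \<omega>) ?B) = (\<lambda>\<omega>. (0, resid X m \<omega>))"
    by (rule ext) (simp add: resz_restrict resid_resz)
  finally show ?thesis .
qed

lemma resid_distr_eq:
  "distr M borel (resid X k) =
     distr (PiM (UNIV :: 'n set) (\<lambda>_. H)) borel (\<lambda>w. (\<chi> i. w i - (\<Sum>j\<in>UNIV. w j) / real CARD('n)) :: real ^ 'n)"
proof -
  let ?P = "PiM (UNIV :: (nat \<times> 'n) set) (\<lambda>_. H)" and ?P1 = "PiM (UNIV :: 'n set) (\<lambda>_. H)"
  let ?Xv = "\<lambda>\<omega>. \<lambda>p\<in>UNIV. X (fst p) (snd p) \<omega>"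
  let ?g = "\<lambda>w. (\<chi> i. w i - (\<Sum>j\<in>UNIV. w j) / real CARD('n)) :: real ^ 'n"
  let ?pr = "\<lambda>w. \<lambda>i\<in>(UNIV::'n set). w (k, i)"
  have gm: "?g \<in> borel_measurable ?P1"
    by (intro borel_measurable_vec_lambda) measurable
  have prm: "?pr \<in> measurable ?P ?P1" by measurable
  have Xvm: "?Xv \<in> measurable M ?P" by measurable
  have full0: "distr M (PiM UNIV (\<lambda>_. borel)) ?Xv = PiM UNIV (\<lambda>p. distr M borel (X (fst p) (snd p)))"
    using ind by (subst (asm) indep_vars_iff_distr_eq_PiM) auto
  have full: "distr M ?P ?Xv = ?P"
  proof -
    have "distr M ?P ?Xv = distr M (PiM UNIV (\<lambda>_. borel)) ?Xv"
      by (rule distr_cong) (auto intro!: sets_PiM_cong simp: sets_H)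
    also have "\<dots> = ?P" unfolding full0 dist ..
    finally show ?thesis .
  qed
  have "distr M borel (resid X k) = distr M borel (?g \<circ> ?pr \<circ> ?Xv)"
    by (rule distr_cong) (auto simp: resid_def row_mean_def)
  also have "\<dots> = distr (distr M ?P ?Xv) borel (?g \<circ> ?pr)"
    by (rule distr_distr[symmetric]) (use gm prm Xvm in measurable)
  also have "\<dots> = distr (distr ?P ?P1 ?pr) borel ?g"
    unfolding full by (rule distr_distr[symmetric, OF gm prm])
  also have "distr ?P ?P1 ?pr = ?P1"
    using distr_PiM_reindex[of UNIV "\<lambda>_. H" "Pair k" UNIV] PH by (simp add: inj_on_def)
  finally show ?thesis .
qed

lemma resid_distr_same: "distr M borel (resid X k) = distr M borel (resid X 0)"
  unfolding resid_distr_eq ..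

lemma prob_Q: "prob_space (distr M borel (resid X 0))"
  by (rule prob_space_distr) simp

lemma sets_Q: "sets (distr M borel (resid X 0)) = sets borel"
  by simp

lemma conv_law: "distr M borel (resid_sum X k) = convp (distr M borel (resid X 0)) k"
proof (induction k)
  case 0
  have "resid_sum X 0 = (\<lambda>_. 0)" unfolding resid_sum_def by (rule ext) simp
  then show ?case by simp
next
  case (Suc k)
  let ?Q = "distr M borel (resid X 0)"
  have eq: "resid_sum X (Suc k) = (\<lambda>\<omega>. resid_sum X k \<omega> + resid X k \<omega>)"
    unfolding resid_sum_def by (rule ext) simp
  have "distr M borel (resid_sum X (Suc k)) = distr M borel ((\<lambda>z. fst z + snd z) \<circ> (\<lambda>\<omega>. (resid_sum X k \<omega>, resid X k \<omega>)))"
    unfolding eq by (simp add: comp_def)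
  also have "\<dots> = distr (distr M (borel \<Otimes>\<^sub>M borel) (\<lambda>\<omega>. (resid_sum X k \<omega>, resid X k \<omega>))) borel (\<lambda>z. fst z + snd z)"
    by (rule distr_distr[symmetric]) measurable
  also have "distr M (borel \<Otimes>\<^sub>M borel) (\<lambda>\<omega>. (resid_sum X k \<omega>, resid X k \<omega>)) = distr M borel (resid_sum X k) \<Otimes>\<^sub>M distr M borel (resid X k)"
    using ind1[of k] by (simp add: indep_var_distribution_eq)
  also have "\<dots> = convp ?Q k \<Otimes>\<^sub>M ?Q"
    unfolding Suc resid_distr_same[of k] ..
  also have "distr (convp ?Q k \<Otimes>\<^sub>M ?Q) borel (\<lambda>z. fst z + snd z) = convp ?Q (Suc k)"
    by (rule convp_Suc'[symmetric])
  finally show ?case .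
qed

lemma sfs: "sigma_finite_subalgebra M (resid_sigma M X j)"
proof (rule finite_measure_subalgebra_is_sigma_finite)
  have "subalgebra M (resid_sigma M X j)"
    unfolding subalgebra_def resid_sigma_def
    using sets_image_in_sets[of M "space M" "resid_sum X j" borel] by auto
  then show "finite_measure_subalgebra M (resid_sigma M X j)"
    unfolding finite_measure_subalgebra_def finite_measure_subalgebra_axioms_def
    using finite_measure_axioms by auto
qed

lemma xb_sq: "integrable M (\<lambda>\<omega>. (row_mean X 0 \<omega>)\<^sup>2)"
proof -
  have eq: "\<And>\<omega>. (row_mean X 0 \<omega>)\<^sup>2 = (\<Sum>i\<in>UNIV. \<Sum>j\<in>UNIV. X 0 i \<omega> * X 0 j \<omega>) / (real CARD('n))\<^sup>2"
    unfolding row_mean_def by (simp add: power_divide power2_eq_square sum_product)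
  have "\<And>i j. integrable M (\<lambda>\<omega>. X 0 i \<omega> * X 0 j \<omega>)"
    by (rule integrable_mult_sq) (auto intro: X_sq)
  then show ?thesis unfolding eq by auto
qed

lemma xb_int: "integrable M (row_mean X 0)"
  by (rule square_integrable_imp_integrable[OF _ xb_sq]) simp

lemma claimF:
  assumes "0 < m" and [measurable]: "\<phi> \<in> borel_measurable borel"
    and int: "integrable M (\<lambda>\<omega>. row_mean X 0 \<omega> * \<phi> (resid_sum X (Suc m) \<omega>))"
  shows "(\<integral>\<omega>. row_mean X 0 \<omega> * \<phi> (resid_sum X (Suc m) \<omega>) \<partial>M) =
    (\<integral>\<omega>. row_mean X 0 \<omega> * Aop (distr M borel (resid X 0)) \<phi> (resid_sum X m \<omega>) \<partial>M)"
proof -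
  let ?T = "\<lambda>\<omega>. (row_mean X 0 \<omega>, resid_sum X m \<omega>)" and ?R = "\<lambda>\<omega>. (0::real, resid X m \<omega>)"
  let ?BB = "borel \<Otimes>\<^sub>M borel :: (real \<times> (real ^ 'n)) measure"
  let ?JT = "distr M ?BB ?T" and ?JR = "distr M ?BB ?R"
  let ?Q = "distr M borel (resid X 0)"
  have [measurable]: "Aop ?Q \<phi> \<in> borel_measurable borel" by (rule Aop_meas[OF prob_Q sets_Q]) simp
  interpret JT: prob_space ?JT by (rule prob_space_distr) measurable
  interpret JR: prob_space ?JR by (rule prob_space_distr) measurable
  interpret P: pair_prob_space ?JT ?JR
    unfolding pair_prob_space_def pair_sigma_finite_def
    by (intro conjI prob_space_imp_sigma_finite JT.prob_space_axioms JR.prob_space_axioms)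
  have joint: "distr M (?BB \<Otimes>\<^sub>M ?BB) (\<lambda>\<omega>. (?T \<omega>, ?R \<omega>)) = ?JT \<Otimes>\<^sub>M ?JR"
    using ind2[OF assms(1)] by (simp add: indep_var_distribution_eq)
  let ?f = "\<lambda>z. fst (fst z) * \<phi> (snd (fst z) + snd (snd z))"
  have fm: "?f \<in> borel_measurable (?BB \<Otimes>\<^sub>M ?BB)" by measurable
  have fm': "?f \<in> borel_measurable (?JT \<Otimes>\<^sub>M ?JR)"
    using fm by (subst measurable_cong_sets[OF sets_pair_measure_cong[OF sets_distr sets_distr] refl])
  have eqS: "\<And>\<omega>. resid_sum X (Suc m) \<omega> = resid_sum X m \<omega> + resid X m \<omega>"
    unfolding resid_sum_def by simp
  have fint: "integrable (?JT \<Otimes>\<^sub>M ?JR) ?f"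
  proof -
    have "integrable (distr M (?BB \<Otimes>\<^sub>M ?BB) (\<lambda>\<omega>. (?T \<omega>, ?R \<omega>))) ?f"
      using int by (subst integrable_distr_eq) (auto simp: eqS intro: fm)
    then show ?thesis unfolding joint .
  qed
  have inner: "(\<integral>r. ?f (t, r) \<partial>?JR) = fst t * Aop ?Q \<phi> (snd t)" for t
  proof -
    have "(\<integral>r. ?f (t, r) \<partial>?JR) = fst t * (\<integral>r. \<phi> (snd t + snd r) \<partial>?JR)"
      unfolding prod.sel by (rule integral_mult_right_zero)
    also have "(\<integral>r. \<phi> (snd t + snd r) \<partial>?JR) = (\<integral>\<omega>. \<phi> (snd t + snd (?R \<omega>)) \<partial>M)"
      by (rule integral_distr) measurable
    also have "\<dots> = (\<integral>\<omega>. \<phi> (snd t + resid X m \<omega>) \<partial>M)"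
      by (simp only: snd_conv)
    also have "\<dots> = (\<integral>a. \<phi> (snd t + a) \<partial>distr M borel (resid X m))"
      by (rule integral_distr[symmetric]) measurable
    also have "\<dots> = Aop ?Q \<phi> (snd t)" unfolding Aop_def by (simp only: resid_distr_same[of m])
    finally show ?thesis .
  qed
  have "(\<integral>\<omega>. row_mean X 0 \<omega> * \<phi> (resid_sum X (Suc m) \<omega>) \<partial>M) = (\<integral>\<omega>. ?f (?T \<omega>, ?R \<omega>) \<partial>M)"
    by (simp add: eqS)
  also have "\<dots> = integral\<^sup>L (distr M (?BB \<Otimes>\<^sub>M ?BB) (\<lambda>\<omega>. (?T \<omega>, ?R \<omega>))) ?f"
    by (rule integral_distr[symmetric]) (auto intro: fm)
  also have "\<dots> = integral\<^sup>L (?JT \<Otimes>\<^sub>M ?JR) ?f" unfolding joint ..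
  also have "\<dots> = (\<integral>t. (\<integral>r. ?f (t, r) \<partial>?JR) \<partial>?JT)"
    by (rule P.integral_fst'[OF fint, symmetric])
  also have "\<dots> = (\<integral>t. fst t * Aop ?Q \<phi> (snd t) \<partial>?JT)"
    unfolding inner ..
  also have "\<dots> = (\<integral>\<omega>. row_mean X 0 \<omega> * Aop ?Q \<phi> (resid_sum X m \<omega>) \<partial>M)"
    by (subst integral_distr) auto
  finally show ?thesis .
qed

lemma main_ineq:
  assumes "1 < N"
  shows "real N * variance (real_cond_exp M (resid_sigma M X N) (row_mean X 0))
    \<le> real (N - 1) * variance (real_cond_exp M (resid_sigma M X (N - 1)) (row_mean X 0))"
proof -
  obtain m where N: "N = Suc m" and m0: "0 < m" using assms by (cases N) auto
  have Nm: "N - 1 = m" using N by simp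
  let ?xb = "row_mean X 0"
  let ?V = "\<lambda>j. real_cond_exp M (resid_sigma M X j) ?xb"
  let ?Q = "distr M borel (resid X 0)"
  define \<mu> where "\<mu> = expectation ?xb"
  have Vm[measurable]: "\<And>j. ?V j \<in> borel_measurable M" by simp
  have Vsq: "integrable M (\<lambda>\<omega>. (?V j \<omega>)\<^sup>2)" for j
  proof -
    interpret S: sigma_finite_subalgebra M "resid_sigma M X j" by (rule sfs)
    show ?thesis
      by (rule S.integrable_convex_cond_exp[of ?xb UNIV 0 0 "\<lambda>x. x\<^sup>2"]) (use xb_int xb_sq convex_power2 in auto)
  qed
  have Vint: "expectation (?V j) = \<mu>" for j
  proof -
    interpret S: sigma_finite_subalgebra M "resid_sigma M X j" by (rule sfs)
    show ?thesis unfolding \<mu>_def by (rule S.real_cond_exp_int(2)[OF xb_int])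
  qed
  have Vorth: "(\<integral>\<omega>. f \<omega> * ?V j \<omega> \<partial>M) = (\<integral>\<omega>. f \<omega> * ?xb \<omega> \<partial>M)"
    if "f \<in> borel_measurable (resid_sigma M X j)" "integrable M (\<lambda>\<omega>. f \<omega> * ?xb \<omega>)" for f j
  proof -
    interpret S: sigma_finite_subalgebra M "resid_sigma M X j" by (rule sfs)
    show ?thesis by (rule S.real_cond_exp_intg(2)[OF that(2) that(1)]) simp
  qed
  have "?V N \<in> borel_measurable (vimage_algebra (space M) (resid_sum X N) borel)"
    using borel_measurable_cond_exp[of M "resid_sigma M X N" ?xb] unfolding resid_sigma_def .
  then have "\<exists>\<phi>\<in>borel_measurable borel. \<forall>\<omega>\<in>space M. ?V N \<omega> = \<phi> (resid_sum X N \<omega>)"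
    by (intro doob_dynkin) simp_all
  then obtain \<phi> where \<phi>m[measurable]: "\<phi> \<in> borel_measurable borel"
    and \<phi>eq: "\<forall>\<omega>\<in>space M. ?V N \<omega> = \<phi> (resid_sum X N \<omega>)"
    by blast
  have Aopm[measurable]: "Aop ?Q \<phi> \<in> borel_measurable borel" by (rule Aop_meas[OF prob_Q sets_Q]) simp
  have \<phi>sq: "integrable (convp ?Q (Suc m)) (\<lambda>x. (\<phi> x)\<^sup>2)"
  proof -
    have "integrable M (\<lambda>\<omega>. (\<phi> (resid_sum X N \<omega>))\<^sup>2) \<longleftrightarrow> integrable M (\<lambda>\<omega>. (?V N \<omega>)\<^sup>2)"
      by (rule Bochner_Integration.integrable_cong[OF refl]) (use \<phi>eq in auto)
    then have "integrable M (\<lambda>\<omega>. (\<phi> (resid_sum X N \<omega>))\<^sup>2)" using Vsq[of N] by simp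
    then have "integrable (distr M borel (resid_sum X N)) (\<lambda>x. (\<phi> x)\<^sup>2)"
      by (subst integrable_distr_eq) auto
    then show ?thesis unfolding conv_law N .
  qed
  have c\<phi>: "(\<integral>x. \<phi> x \<partial>convp ?Q (Suc m)) = \<mu>"
  proof -
    have "(\<integral>x. \<phi> x \<partial>convp ?Q (Suc m)) = (\<integral>\<omega>. \<phi> (resid_sum X N \<omega>) \<partial>M)"
      unfolding conv_law[symmetric] N by (rule integral_distr) auto
    also have "\<dots> = expectation (?V N)"
      by (rule Bochner_Integration.integral_cong) (use \<phi>eq in auto)
    finally show ?thesis using Vint by simp
  qed
  have ES0: "real (Suc m) * (\<integral>u. (Aop ?Q \<phi> u - \<mu>)\<^sup>2 \<partial>convp ?Q m) \<le> real m * (\<integral>x. (\<phi> x - \<mu>)\<^sup>2 \<partial>convp ?Q (Suc m))"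
    using ES_real[OF prob_Q sets_Q \<phi>m \<phi>sq] c\<phi> by simp
  let ?Y = "\<lambda>\<omega>. Aop ?Q \<phi> (resid_sum X m \<omega>)"
  have eY: "(\<integral>u. (Aop ?Q \<phi> u - \<mu>)\<^sup>2 \<partial>convp ?Q m) = (\<integral>\<omega>. (?Y \<omega> - \<mu>)\<^sup>2 \<partial>M)"
    unfolding conv_law[symmetric] by (rule integral_distr) auto
  have eV: "(\<integral>x. (\<phi> x - \<mu>)\<^sup>2 \<partial>convp ?Q (Suc m)) = variance (?V N)"
  proof -
    have "(\<integral>x. (\<phi> x - \<mu>)\<^sup>2 \<partial>convp ?Q (Suc m)) = (\<integral>\<omega>. (\<phi> (resid_sum X N \<omega>) - \<mu>)\<^sup>2 \<partial>M)"
      unfolding conv_law[symmetric] N by (rule integral_distr) auto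
    also have "\<dots> = (\<integral>\<omega>. (?V N \<omega> - \<mu>)\<^sup>2 \<partial>M)"
      by (rule Bochner_Integration.integral_cong) (use \<phi>eq in auto)
    finally show ?thesis using Vint[of N] by simp
  qed
  have Ysq: "integrable M (\<lambda>\<omega>. (?Y \<omega>)\<^sup>2)"
  proof -
    have "integrable (convp ?Q m) (\<lambda>u. (Aop ?Q \<phi> u)\<^sup>2)" by (rule PY(1)[OF prob_Q sets_Q \<phi>m \<phi>sq])
    then have "integrable (distr M borel (resid_sum X m)) (\<lambda>u. (Aop ?Q \<phi> u)\<^sup>2)" unfolding conv_law .
    then show ?thesis by (subst (asm) integrable_distr_eq) auto
  qed
  have EY: "expectation ?Y = \<mu>"
  proof -
    have "(\<integral>u. Aop ?Q \<phi> u \<partial>convp ?Q m) = \<mu>" using PY(2)[OF prob_Q sets_Q \<phi>m \<phi>sq] c\<phi> by simp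
    moreover have "(\<integral>u. Aop ?Q \<phi> u \<partial>convp ?Q m) = expectation ?Y"
      unfolding conv_law[symmetric] by (rule integral_distr) auto
    ultimately show ?thesis by simp
  qed
  have YG: "?Y \<in> borel_measurable (resid_sigma M X m)"
    unfolding resid_sigma_def
    by (rule measurable_compose[OF measurable_vimage_algebra1 Aopm]) simp
  have xbY: "integrable M (\<lambda>\<omega>. ?Y \<omega> * ?xb \<omega>)" by (rule integrable_mult_sq[OF _ _ Ysq xb_sq]) auto
  have xbV: "integrable M (\<lambda>\<omega>. ?V N \<omega> * ?xb \<omega>)" by (rule integrable_mult_sq[OF _ _ Vsq xb_sq]) auto
  have b: "(\<integral>\<omega>. ?Y \<omega> * ?V m \<omega> \<partial>M) = (\<integral>\<omega>. ?Y \<omega> * ?xb \<omega> \<partial>M)"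
    by (rule Vorth[OF YG xbY])
  have a: "(\<integral>\<omega>. ?V N \<omega> * ?V N \<omega> \<partial>M) = (\<integral>\<omega>. ?V N \<omega> * ?xb \<omega> \<partial>M)"
    by (rule Vorth[OF _ xbV]) simp
  have link: "(\<integral>\<omega>. ?xb \<omega> * \<phi> (resid_sum X (Suc m) \<omega>) \<partial>M) = (\<integral>\<omega>. ?V N \<omega> * ?xb \<omega> \<partial>M)"
    by (rule Bochner_Integration.integral_cong) (use \<phi>eq N in auto)
  have "integrable M (\<lambda>\<omega>. ?xb \<omega> * \<phi> (resid_sum X (Suc m) \<omega>)) \<longleftrightarrow> integrable M (\<lambda>\<omega>. ?V N \<omega> * ?xb \<omega>)"
    by (rule Bochner_Integration.integrable_cong[OF refl]) (use \<phi>eq N in auto)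
  then have intF: "integrable M (\<lambda>\<omega>. ?xb \<omega> * \<phi> (resid_sum X (Suc m) \<omega>))" using xbV by simp
  have F: "(\<integral>\<omega>. ?xb \<omega> * \<phi> (resid_sum X (Suc m) \<omega>) \<partial>M) = (\<integral>\<omega>. ?xb \<omega> * ?Y \<omega> \<partial>M)"
    by (rule claimF[OF m0 \<phi>m intF])
  have key: "(\<integral>\<omega>. ?V m \<omega> * ?Y \<omega> \<partial>M) = (\<integral>\<omega>. (?V N \<omega>)\<^sup>2 \<partial>M)"
    using a b F link by (simp add: power2_eq_square mult.commute)
  have VmY: "integrable M (\<lambda>\<omega>. ?V m \<omega> * ?Y \<omega>)" by (rule integrable_mult_sq[OF _ _ Vsq Ysq]) auto
  have Vmi: "integrable M (?V m)" by (rule square_integrable_imp_integrable[OF _ Vsq]) simp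
  have Yi: "integrable M ?Y" by (rule square_integrable_imp_integrable[OF _ Ysq]) simp
  have VNi: "integrable M (?V N)" by (rule square_integrable_imp_integrable[OF _ Vsq]) simp
  have cov: "(\<integral>\<omega>. (?V m \<omega> - \<mu>) * (?Y \<omega> - \<mu>) \<partial>M) = variance (?V N)"
  proof -
    have eq: "\<And>\<omega>. (?V m \<omega> - \<mu>) * (?Y \<omega> - \<mu>) = ?V m \<omega> * ?Y \<omega> - \<mu> * ?Y \<omega> - \<mu> * ?V m \<omega> + \<mu>\<^sup>2"
      by (simp add: power2_eq_square algebra_simps)
    have "(\<integral>\<omega>. (?V m \<omega> - \<mu>) * (?Y \<omega> - \<mu>) \<partial>M) = (\<integral>\<omega>. (?V N \<omega>)\<^sup>2 \<partial>M) - \<mu>\<^sup>2"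
      unfolding eq using VmY Vmi Yi key EY Vint[of m] by (simp add: prob_space power2_eq_square)
    also have "\<dots> = variance (?V N)"
      using variance_eq[OF VNi Vsq] Vint[of N] by simp
    finally show ?thesis .
  qed
  have CS: "(\<integral>\<omega>. (?V m \<omega> - \<mu>) * (?Y \<omega> - \<mu>) \<partial>M)\<^sup>2 \<le> (\<integral>\<omega>. (?V m \<omega> - \<mu>)\<^sup>2 \<partial>M) * (\<integral>\<omega>. (?Y \<omega> - \<mu>)\<^sup>2 \<partial>M)"
    by (rule cauchy_schwarz_int) (auto intro: sq_integral_expand(1)[OF PM _ Vsq] sq_integral_expand(1)[OF PM _ Ysq])
  have wV: "(\<integral>\<omega>. (?V m \<omega> - \<mu>)\<^sup>2 \<partial>M) = variance (?V m)" using Vint[of m] by simp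
  show ?thesis unfolding Nm
    by (rule final_arith[of _ _ _ _ "(\<integral>\<omega>. (?Y \<omega> - \<mu>)\<^sup>2 \<partial>M)"])
       (use CS cov wV ES0 eY eV N in auto)
qed

end


theorem corollary2:
  fixes M :: "'a measure" and H :: "real measure"
    and X :: "nat \<Rightarrow> 'n::finite \<Rightarrow> 'a \<Rightarrow> real" and N :: nat
  assumes "prob_space M"
    and "prob_space H"
    and "integrable H (\<lambda>x. x\<^sup>2)"
    and "prob_space.indep_vars M (\<lambda>_. borel) (\<lambda>p. X (fst p) (snd p)) UNIV"
    and "\<And>k i. distr M borel (X k i) = H"
    and "N > 1"
  shows "real (N - 1) * prob_space.variance M (real_cond_exp M (resid_sigma M X (N - 1)) (row_mean X 0))
         \<ge> real N * prob_space.variance M (real_cond_exp M (resid_sigma M X N) (row_mean X 0))"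
  using main_ineq[OF assms(1,2,3,4) assms(5) assms(6)] by simp

end
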